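(* Let $n$ be a positive integer, let $u:2^{[n]}\to\mathbb{R}_{\ge 0}$ be a normalized ($u(\emptyset)=0$), monotone, submodular and second-order supermodular set function, and let $c:2^{[n]}\to\mathbb{R}_{\ge 0}$ be the modular set function $c(S)=\sum_{i\in S}c_i$ with $c_1,\dots,c_n>0$. Let $(l_1,\dots,l_n)$ be a locally optimal permutation of $[n]$ (in the sense defined in the context) and let $(o_1,\dots,o_n)$ be an optimal permutation for Min-Sum Submodular Cover on $(u,c)$. Write $L_j=\{l_1,\dots,l_j\}$ and $O_i=\{o_1,\dots,o_i\}$ (with $L_0=O_0=\emptyset$), and $c(o_i)=c(\{o_i\})$. For $i,j\in[n]$ define $$b_{ij}=u(o_i\mid O_{i-1}\cup L_{j-1})-u(o_i\mid O_{i-1}\cup L_{j-1}\cup\{l_j\}),$$ which also equals $u(l_j\mid O_{i-1}\cup L_{j-1})-u(l_j\mid O_{i-1}\cup L_{j-1}\cup\{o_i\})$. Then for all $i,j\in[n]$, $$\sum_{r=j}^n c(L_r)\sum_{s=1}^n b_{sr}\;\le\;[c(o_i)+c(L_{j-1})]\sum_{r=j}^n b_{ir}+\sum_{r=j}^n [c(o_i)+c(L_r)]\sum_{\substack{s=1\\ s\ne i}}^n b_{sr}.$$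
   Context: Notation: $f(e\mid S):=f(S\cup\{e\})-f(S)$. A set function $f$ on $2^{[n]}$ is monotone if $f(S\cup\{i\})\ge f(S)$, submodular if $f(i\mid S)\ge f(i\mid S\cup\{j\})$, and second-order supermodular if $f(i\mid S)-f(i\mid S\cup\{j\})\ge f(i\mid S\cup\{k\})-f(i\mid S\cup\{k,j\})$, for all $S\subseteq[n]$ and $i,j,k\in[n]\setminus S$. Min-Sum Submodular Cover on $(u,c)$: minimize over permutations of $[n]$ the objective $\sum_{i=1}^n c(S_i)(u(S_i)-u(S_{i-1}))$, $S_i$ the set of the first $i$ elements, $S_0=\emptyset$. Pseudo-neighbors and local optimality: a pseudo-neighbor of a permutation $\pi$ is a sequence of length $n+1$ obtained by taking the element at some position $i$ of $\pi$ and inserting a second copy of it at some position $j<i$. Its objective value is $\sum_{k=1}^{n+1} c'(S_k)[u(S_k)-u(S_{k-1})]$, where $S_k$ is its prefix of length $k$, $u(S_k)$ is $u$ evaluated on the set of distinct elements of $S_k$, and $c'(S_k)=\sum_{t=1}^k c(\{s_t\})$ with $s_t$ the element in position $t$ (so both copies are charged when both lie in the prefix). A permutation is locally optimal if no pseudo-neighbor has strictly lower objective value than it. *)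

theory Defs
  imports Complex_Main
begin

text \<open>Ground set [n] = {1..n}. Set functions are functions nat set => real, with
  all conditions imposed on subsets of [n]. Permutations are lists.\<close>

definition marg :: "(nat set \<Rightarrow> real) \<Rightarrow> nat \<Rightarrow> nat set \<Rightarrow> real" where
  "marg f e S = f (insert e S) - f S"

definition monotone_sf :: "nat \<Rightarrow> (nat set \<Rightarrow> real) \<Rightarrow> bool" where
  "monotone_sf n f \<longleftrightarrow> (\<forall>S i. S \<subseteq> {1..n} \<and> i \<in> {1..n} - S \<longrightarrow> f (insert i S) \<ge> f S)"

definition submodular_sf :: "nat \<Rightarrow> (nat set \<Rightarrow> real) \<Rightarrow> bool" where
  "submodular_sf n f \<longleftrightarrow> (\<forall>S i j. S \<subseteq> {1..n} \<and> i \<in> {1..n} - S \<and> j \<in> {1..n} - S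
      \<longrightarrow> marg f i S \<ge> marg f i (insert j S))"

definition second_order_supermodular :: "nat \<Rightarrow> (nat set \<Rightarrow> real) \<Rightarrow> bool" where
  "second_order_supermodular n f \<longleftrightarrow> (\<forall>S i j k. S \<subseteq> {1..n} \<and> i \<in> {1..n} - S
      \<and> j \<in> {1..n} - S \<and> k \<in> {1..n} - S
      \<longrightarrow> marg f i S - marg f i (insert j S) \<ge> marg f i (insert k S) - marg f i (insert k (insert j S)))"

text \<open>A permutation of [n], as a list (position t holds element xs!(t-1)).\<close>
definition is_perm :: "nat \<Rightarrow> nat list \<Rightarrow> bool" where
  "is_perm n xs \<longleftrightarrow> distinct xs \<and> set xs = {1..n}"

text \<open>Objective value of a sequence (possibly with repeated elements), with modular cost
  given by weights cw: c'(S_k) sums the weights of all entries of the length-k prefix.\<close>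
definition seq_obj :: "(nat set \<Rightarrow> real) \<Rightarrow> (nat \<Rightarrow> real) \<Rightarrow> nat list \<Rightarrow> real" where
  "seq_obj u cw xs = (\<Sum>k=1..length xs. sum_list (map cw (take k xs)) *
       (u (set (take k xs)) - u (set (take (k - 1) xs))))"

definition pseudo_neighbor :: "nat list \<Rightarrow> nat \<Rightarrow> nat \<Rightarrow> nat list" where
  "pseudo_neighbor xs i j = take j xs @ [xs ! i] @ drop j xs"

definition locally_optimal :: "(nat set \<Rightarrow> real) \<Rightarrow> (nat \<Rightarrow> real) \<Rightarrow> nat list \<Rightarrow> bool" where
  "locally_optimal u cw xs \<longleftrightarrow>
     (\<forall>i j. i < length xs \<and> j < i \<longrightarrow> seq_obj u cw xs \<le> seq_obj u cw (pseudo_neighbor xs i j))"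

definition optimal_perm :: "nat \<Rightarrow> (nat set \<Rightarrow> real) \<Rightarrow> (nat \<Rightarrow> real) \<Rightarrow> nat list \<Rightarrow> bool" where
  "optimal_perm n u cw xs \<longleftrightarrow> is_perm n xs \<and>
     (\<forall>ys. is_perm n ys \<longrightarrow> seq_obj u cw xs \<le> seq_obj u cw ys)"

end

theory Submission
  imports Defs
begin

lemma mono_aux:
  assumes "finite F" "monotone_sf n u"
  shows "S \<union> F \<subseteq> {1..n} \<Longrightarrow> u S \<le> u (S \<union> F)"
  using assms(1)
proof (induction F rule: finite_induct)
  case empty then show ?case by simp
next
  case (insert x F)
  then have 1: "u S \<le> u (S \<union> F)" by auto
  have "u (S \<union> F) \<le> u (insert x (S \<union> F))"
  proof (cases "x \<in> S \<union> F")
    case True then show ?thesis by (simp add: insert_absorb)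
  next
    case False
    then show ?thesis using assms(2) insert.prems unfolding monotone_sf_def by auto
  qed
  then show ?case using 1 by simp
qed

lemma mono_sub:
  assumes m: "monotone_sf n u" and T: "T \<subseteq> {1..n}" and ST: "S \<subseteq> T"
  shows "u S \<le> u T"
proof -
  have f: "finite (T - S)" using T finite_subset by blast
  have "T = S \<union> (T - S)" using ST by blast
  then show ?thesis using mono_aux[OF f m, of S] T by simp
qed

definition D :: "(nat set \<Rightarrow> real) \<Rightarrow> nat \<Rightarrow> nat \<Rightarrow> nat set \<Rightarrow> real" where
  "D u x y S = marg u x S - marg u x (insert y S)"

lemma so_step:
  assumes so: "second_order_supermodular n u" and S: "S \<subseteq> {1..n}"
    and x: "x \<in> {1..n}" and y: "y \<in> {1..n}" and k: "k \<in> {1..n}"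
  shows "D u x y (insert k S) \<le> D u x y S"
proof (cases "k \<in> S")
  case True then show ?thesis by (simp add: insert_absorb)
next
  case kS: False
  show ?thesis
  proof (cases "x \<in> S")
    case True then show ?thesis by (simp add: D_def marg_def insert_absorb)
  next
    case xS: False
    show ?thesis
    proof (cases "y \<in> S")
      case True then show ?thesis by (simp add: D_def marg_def insert_absorb)
    next
      case False
      have "marg u x S - marg u x (insert y S) \<ge> marg u x (insert k S) - marg u x (insert k (insert y S))"
        using so[unfolded second_order_supermodular_def, rule_format, of S x y k] S x y k kS xS False
        by auto
      then show ?thesis by (simp add: D_def insert_commute)
    qed
  qed
qed

lemma so_aux:
  assumes "finite F" "second_order_supermodular n u" "x \<in> {1..n}" "y \<in> {1..n}"
  shows "S \<union> F \<subseteq> {1..n} \<Longrightarrow> D u x y (S \<union> F) \<le> D u x y S"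
  using assms(1)
proof (induction F rule: finite_induct)
  case empty then show ?case by simp
next
  case (insert k F)
  then have 1: "D u x y (S \<union> F) \<le> D u x y S" by auto
  have "D u x y (insert k (S \<union> F)) \<le> D u x y (S \<union> F)"
    using so_step[OF assms(2) _ assms(3,4), of "S \<union> F" k] insert.prems by auto
  then show ?case using 1 by simp
qed

lemma so_sub:
  assumes so: "second_order_supermodular n u" and T: "T \<subseteq> {1..n}" and ST: "S \<subseteq> T"
    and "x \<in> {1..n}" "y \<in> {1..n}"
  shows "D u x y T \<le> D u x y S"
proof -
  have f: "finite (T - S)" using T finite_subset by blast
  have "T = S \<union> (T - S)" using ST by blast
  then show ?thesis using so_aux[OF f so assms(4,5), of S] T by simp
qed

lemma tele:
  fixes f :: "nat \<Rightarrow> real"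
  shows "m \<le> n \<Longrightarrow> (\<Sum>r=Suc m..n. f (r - 1) - f r) = f m - f n"
proof (induction n)
  case 0 then show ?case by simp
next
  case (Suc n)
  show ?case
  proof (cases "m \<le> n")
    case True
    then show ?thesis using Suc by (simp add: sum.cl_ivl_Suc)
  next
    case False
    then have "m = Suc n" using Suc by simp
    then show ?thesis by simp
  qed
qed

definition Tm :: "(nat set \<Rightarrow> real) \<Rightarrow> (nat \<Rightarrow> real) \<Rightarrow> nat list \<Rightarrow> nat \<Rightarrow> real" where
  "Tm u cw xs k = sum_list (map cw (take k xs)) * (u (set (take k xs)) - u (set (take (k - 1) xs)))"

lemma seq_obj_Tm: "seq_obj u cw xs = (\<Sum>k=1..length xs. Tm u cw xs k)"
  by (simp add: seq_obj_def Tm_def)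

lemma split_sum:
  fixes f :: "nat \<Rightarrow> real"
  assumes "q \<le> N"
  shows "(\<Sum>k=1..N. f k) = (\<Sum>k=1..q. f k) + (\<Sum>k=Suc q..N. f k)"
proof -
  have "{1..N} = {1..q} \<union> {Suc q..N}" using assms by auto
  then show ?thesis by (simp add: sum.union_disjoint ivl_disj_int)
qed

lemma take_pn_le: "k \<le> q \<Longrightarrow> q \<le> length l \<Longrightarrow> take k (take q l @ [x] @ drop q l) = take k l"
  by (simp add: min_def)

lemma take_pn_gt: "q < k \<Longrightarrow> q \<le> length l \<Longrightarrow>
   take k (take q l @ [x] @ drop q l) = take q l @ x # take (k - Suc q) (drop q l)"
  by (simp add: min_def take_Cons')

lemma take_add': "take q l @ take m (drop q l) = take (q + m) l"
  by (simp add: take_add)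

lemma pn_obj:
  assumes q: "q < length l"
  shows "seq_obj u cw (take q l @ [x] @ drop q l) = (\<Sum>k=1..q. Tm u cw l k)
     + sum_list (map cw (take q l @ [x])) * (u (insert x (set (take q l))) - u (set (take q l)))
     + (\<Sum>r=Suc q..length l. (sum_list (map cw (take r l)) + cw x) *
          (u (insert x (set (take r l))) - u (insert x (set (take (r - 1) l)))))"
proof -
  define p where "p = take q l @ [x] @ drop q l"
  have len: "length p = Suc (length l)" using q by (simp add: p_def)
  have 1: "seq_obj u cw p = (\<Sum>k=1..q. Tm u cw p k) + (\<Sum>k=Suc q..Suc (length l). Tm u cw p k)"
    using split_sum[of q "Suc (length l)"] seq_obj_Tm[of u cw p] len q by simp
  have 2: "(\<Sum>k=1..q. Tm u cw p k) = (\<Sum>k=1..q. Tm u cw l k)"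
    by (rule sum.cong) (use q in \<open>auto simp add: Tm_def p_def take_pn_le min_def\<close>)
  have 3: "(\<Sum>k=Suc q..Suc (length l). Tm u cw p k) = Tm u cw p (Suc q) + (\<Sum>k=Suc (Suc q)..Suc (length l). Tm u cw p k)"
    by (rule sum.atLeast_Suc_atMost) (use q in simp)
  have 4: "(\<Sum>k=Suc (Suc q)..Suc (length l). Tm u cw p k) = (\<Sum>r=Suc q..length l. Tm u cw p (Suc r))"
    by (rule sum.shift_bounds_cl_Suc_ivl)
  have 5: "Tm u cw p (Suc r) = (sum_list (map cw (take r l)) + cw x) *
          (u (insert x (set (take r l))) - u (insert x (set (take (r - 1) l))))"
    if r: "r \<in> {Suc q..length l}" for r
  proof -
    have a: "take (Suc r) p = take q l @ x # take (r - q) (drop q l)"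
      using take_pn_gt[of q "Suc r" l x] r q by (simp add: p_def)
    have b: "take r p = take q l @ x # take (r - Suc q) (drop q l)"
      using take_pn_gt[of q r l x] r q by (simp add: p_def)
    have a': "take q l @ take (r - q) (drop q l) = take r l"
      using take_add'[of q l "r - q"] r by simp
    have b': "take q l @ take (r - Suc q) (drop q l) = take (r - 1) l"
      using take_add'[of q l "r - Suc q"] r by simp
    have sa: "set (take q l @ x # take (r - q) (drop q l)) = insert x (set (take r l))"
      unfolding a'[symmetric] by auto
    have sb: "set (take q l @ x # take (r - Suc q) (drop q l)) = insert x (set (take (r - 1) l))"
      unfolding b'[symmetric] by auto
    have sl: "sum_list (map cw (take q l @ x # take (r - q) (drop q l))) = sum_list (map cw (take r l)) + cw x"
      unfolding a'[symmetric] by simp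
    have b2: "set (take r p) = insert x (set (take (r - 1) l))" unfolding b sb ..
    show ?thesis unfolding Tm_def a sa sl by (simp add: b2)
  qed
  have 6: "Tm u cw p (Suc q) = sum_list (map cw (take q l @ [x])) * (u (insert x (set (take q l))) - u (set (take q l)))"
  proof -
    have a: "take (Suc q) p = take q l @ [x]" using q by (simp add: p_def min_def)
    have b: "take q p = take q l" using q by (simp add: p_def min_def)
    show ?thesis unfolding Tm_def using a b by simp
  qed
  have 7: "(\<Sum>r=Suc q..length l. Tm u cw p (Suc r)) = (\<Sum>r=Suc q..length l. (sum_list (map cw (take r l)) + cw x) *
          (u (insert x (set (take r l))) - u (insert x (set (take (r - 1) l)))))"
    by (rule sum.cong[OF refl 5])
  show ?thesis
    unfolding p_def[symmetric] 1 2 3 4 6 7 by simp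
qed


lemma nth_notin_take: "distinct xs \<Longrightarrow> k < length xs \<Longrightarrow> xs ! k \<notin> set (take k xs)"
proof -
  assume d: "distinct xs" and k: "k < length xs"
  have "distinct (take (Suc k) xs)" using d by simp
  then show ?thesis using k by (simp add: take_Suc_conv_app_nth)
qed

theorem lemma1:
  fixes n :: nat and u :: "nat set \<Rightarrow> real" and cw :: "nat \<Rightarrow> real"
    and l ol :: "nat list"
  assumes "n \<ge> 1"
    and "\<forall>S. S \<subseteq> {1..n} \<longrightarrow> u S \<ge> 0"
    and "u {} = 0"
    and "monotone_sf n u" and "submodular_sf n u" and "second_order_supermodular n u"
    and "\<forall>i\<in>{1..n}. cw i > 0"
    and "is_perm n l" and "locally_optimal u cw l"
    and "optimal_perm n u cw ol"
  shows "let c = (\<lambda>S. \<Sum>x\<in>S. cw x);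
             L = (\<lambda>j. set (take j l));
             Os = (\<lambda>i. set (take i ol));
             b = (\<lambda>i j. marg u (ol ! (i - 1)) (Os (i - 1) \<union> L (j - 1))
                        - marg u (ol ! (i - 1)) (Os (i - 1) \<union> L (j - 1) \<union> {l ! (j - 1)}))
         in \<forall>i\<in>{1..n}. \<forall>j\<in>{1..n}.
              (\<Sum>r=j..n. c (L r) * (\<Sum>s=1..n. b s r))
              \<le> (cw (ol ! (i - 1)) + c (L (j - 1))) * (\<Sum>r=j..n. b i r)
                + (\<Sum>r=j..n. (cw (ol ! (i - 1)) + c (L r)) * (\<Sum>s\<in>{1..n} - {i}. b s r))"
proof -
  have dl: "distinct l" and sl: "set l = {1..n}" using assms(8) by (auto simp: is_perm_def)
  have dol: "distinct ol" and sol: "set ol = {1..n}" using assms(10) by (auto simp: is_perm_def optimal_perm_def)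
  have ll: "length l = n" using distinct_card[OF dl] sl by simp
  have lol: "length ol = n" using distinct_card[OF dol] sol by simp
  have mono: "monotone_sf n u" and so: "second_order_supermodular n u" using assms by auto
  have cwpos: "\<And>x. x \<in> {1..n} \<Longrightarrow> cw x > 0" using assms(7) by auto
  define c where "c = (\<lambda>S. \<Sum>x\<in>S. cw x)"
  define L where "L = (\<lambda>j. set (take j l))"
  define Os where "Os = (\<lambda>i. set (take i ol))"
  define b where "b = (\<lambda>i j. marg u (ol ! (i - 1)) (Os (i - 1) \<union> L (j - 1))
                        - marg u (ol ! (i - 1)) (Os (i - 1) \<union> L (j - 1) \<union> {l ! (j - 1)}))"
  have Lsub: "\<And>r. L r \<subseteq> {1..n}" unfolding L_def using sl set_take_subset by metis
  have Ln: "L n = {1..n}" unfolding L_def using ll sl by simp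
  have Lins: "\<And>r. 1 \<le> r \<Longrightarrow> r \<le> n \<Longrightarrow> L r = insert (l ! (r - 1)) (L (r - 1))"
  proof -
    fix r :: nat assume "1 \<le> r" "r \<le> n"
    then have "take r l = take (r - 1) l @ [l ! (r - 1)]"
      using take_Suc_conv_app_nth[of "r - 1" l] ll by simp
    then show "L r = insert (l ! (r - 1)) (L (r - 1))" unfolding L_def by simp
  qed
  have Lnotin: "\<And>r. 1 \<le> r \<Longrightarrow> r \<le> n \<Longrightarrow> l ! (r - 1) \<notin> L (r - 1)"
    unfolding L_def using nth_notin_take[OF dl] ll by simp
  have lin: "\<And>r. 1 \<le> r \<Longrightarrow> r \<le> n \<Longrightarrow> l ! (r - 1) \<in> {1..n}"
  proof -
    fix r :: nat assume "1 \<le> r" "r \<le> n"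
    then have "r - 1 < length l" using ll by simp
    then show "l ! (r - 1) \<in> {1..n}" using sl nth_mem by metis
  qed
  have Lmono: "\<And>r1 r2. r1 \<le> r2 \<Longrightarrow> L r1 \<subseteq> L r2" unfolding L_def by (simp add: set_take_subset_set_take)
  have Osub: "\<And>s. Os s \<subseteq> {1..n}" unfolding Os_def using sol set_take_subset by metis
  have On: "Os n = {1..n}" unfolding Os_def using lol sol by simp
  have O0: "Os 0 = {}" unfolding Os_def by simp
  have L0: "L 0 = {}" unfolding L_def by simp
  have Oins: "\<And>s. 1 \<le> s \<Longrightarrow> s \<le> n \<Longrightarrow> Os s = insert (ol ! (s - 1)) (Os (s - 1))"
  proof -
    fix r :: nat assume "1 \<le> r" "r \<le> n"
    then have "take r ol = take (r - 1) ol @ [ol ! (r - 1)]"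
      using take_Suc_conv_app_nth[of "r - 1" ol] lol by simp
    then show "Os r = insert (ol ! (r - 1)) (Os (r - 1))" unfolding Os_def by simp
  qed
  have olin: "\<And>r. 1 \<le> r \<Longrightarrow> r \<le> n \<Longrightarrow> ol ! (r - 1) \<in> {1..n}"
  proof -
    fix r :: nat assume "1 \<le> r" "r \<le> n"
    then have "r - 1 < length ol" using lol by simp
    then show "ol ! (r - 1) \<in> {1..n}" using sol nth_mem by metis
  qed
  have cL: "\<And>r. c (L r) = sum_list (map cw (take r l))"
    unfolding c_def L_def using dl by (simp add: sum_list_distinct_conv_sum_set)
  have cmono: "\<And>r1 r2. r1 \<le> r2 \<Longrightarrow> c (L r1) \<le> c (L r2)"
  proof -
    fix r1 r2 :: nat assume "r1 \<le> r2"
    then have "L r1 \<subseteq> L r2" by (rule Lmono)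
    moreover have "finite (L r2)" unfolding L_def by simp
    moreover have "\<forall>x\<in>L r2 - L r1. 0 \<le> cw x" using Lsub cwpos by (meson Diff_subset less_imp_le subsetD)
    ultimately show "c (L r1) \<le> c (L r2)" unfolding c_def by (metis sum_mono2)
  qed
  have "\<forall>i\<in>{1..n}. \<forall>j\<in>{1..n}.
              (\<Sum>r=j..n. c (L r) * (\<Sum>s=1..n. b s r))
              \<le> (cw (ol ! (i - 1)) + c (L (j - 1))) * (\<Sum>r=j..n. b i r)
                + (\<Sum>r=j..n. (cw (ol ! (i - 1)) + c (L r)) * (\<Sum>s\<in>{1..n} - {i}. b s r))"
  proof (intro ballI)
    fix i j assume i: "i \<in> {1..n}" and j: "j \<in> {1..n}"
    define oi where "oi = ol ! (i - 1)"
    have oin: "oi \<in> {1..n}" unfolding oi_def using olin i by simp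
    define Dl where "Dl = (\<lambda>r. u (L r) - u (L (r - 1)))"
    define e where "e = (\<lambda>r. u (insert oi (L r)) - u (insert oi (L (r - 1))))"
    define a where "a = (\<lambda>r. marg u oi (L (r - 1)) - marg u oi (L r))"
    have Dlpos: "\<And>r. 1 \<le> r \<Longrightarrow> r \<le> n \<Longrightarrow> 0 \<le> Dl r"
    proof -
      fix r :: nat
      have "u (L (r - 1)) \<le> u (L r)" using mono_sub[OF mono Lsub[of r] Lmono[of "r - 1" r]] by simp
      then show "0 \<le> Dl r" unfolding Dl_def by simp
    qed
    have hsumb: "(\<Sum>s=1..n. b s r) = Dl r" if r: "r \<in> {1..n}" for r
    proof -
      define f where "f = (\<lambda>s. u (Os s \<union> L r) - u (Os s \<union> L (r - 1)))"
      have "b s r = f (s - 1) - f s" if s: "s \<in> {1..n}" for s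
      proof -
        have h1: "Os (s-1) \<union> L (r-1) \<union> {l!(r-1)} = Os (s-1) \<union> L r" using Lins r by auto
        have h2: "insert (ol!(s-1)) (Os (s-1) \<union> L (r-1)) = Os s \<union> L (r-1)" using Oins s by auto
        have h3: "insert (ol!(s-1)) (Os (s-1) \<union> L r) = Os s \<union> L r" using Oins s by auto
        show ?thesis unfolding b_def marg_def h1 h2 h3 f_def by simp
      qed
      then have "(\<Sum>s=1..n. b s r) = (\<Sum>s=Suc 0..n. f (s - 1) - f s)" by simp
      also have "\<dots> = f 0 - f n" by (rule tele) simp
      also have "\<dots> = Dl r"
      proof -
        have "Os n \<union> L r = Os n \<union> L (r - 1)" using On Lsub by (metis sup.absorb1)
        then show ?thesis unfolding f_def Dl_def using O0 by simp
      qed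
      finally show ?thesis .
    qed
    have hsumb': "(\<Sum>s\<in>{1..n} - {i}. b s r) = Dl r - b i r" if r: "r \<in> {1..n}" for r
      using hsumb[OF r] i by (simp add: sum_diff1)
    have hab: "b i r \<le> a r" if r: "r \<in> {j..n}" for r
    proof -
      have r1: "1 \<le> r" "r \<le> n" using r j by auto
      have "b i r = D u oi (l!(r-1)) (Os (i-1) \<union> L (r-1))" unfolding b_def D_def oi_def by simp
      moreover have "a r = D u oi (l!(r-1)) (L (r-1))" unfolding a_def D_def using Lins[OF r1] by simp
      moreover have "D u oi (l!(r-1)) (Os (i-1) \<union> L (r-1)) \<le> D u oi (l!(r-1)) (L (r-1))"
        by (rule so_sub[OF so]) (use Osub Lsub oin lin[OF r1] in auto)
      ultimately show ?thesis by simp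
    qed
    have ha_sum: "(\<Sum>r=j..n. a r) = marg u oi (L (j - 1))"
    proof -
      have "(\<Sum>r=j..n. a r) = (\<Sum>r=Suc (j - 1)..n. marg u oi (L (r - 1)) - marg u oi (L r))"
        using j by (simp add: a_def)
      also have "\<dots> = marg u oi (L (j - 1)) - marg u oi (L n)" by (rule tele) (use j in auto)
      also have "marg u oi (L n) = 0" unfolding marg_def Ln using oin by (simp add: insert_absorb)
      finally show ?thesis by simp
    qed
    have hae: "e r = Dl r - a r" for r unfolding e_def Dl_def a_def marg_def by simp
    have hold_new: "(\<Sum>r=j..n. c (L r) * Dl r) \<le> (cw oi + c (L (j - 1))) * marg u oi (L (j - 1))
         + (\<Sum>r=j..n. (cw oi + c (L r)) * e r)"
    proof (cases "oi \<in> L j")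
      case True
      have j1: "1 \<le> j" "j \<le> n" using j by auto
      have split1: "\<And>f. (\<Sum>r=j..n. f r) = f j + (\<Sum>r=Suc j..n. f r)"
        using j1 by (intro sum.atLeast_Suc_atMost) simp
      have tail: "(\<Sum>r=Suc j..n. c (L r) * Dl r) \<le> (\<Sum>r=Suc j..n. (cw oi + c (L r)) * e r)"
      proof (rule sum_mono)
        fix r assume r: "r \<in> {Suc j..n}"
        have "j \<le> r - 1" "j \<le> r" using r by auto
        then have "L j \<subseteq> L (r - 1)" "L j \<subseteq> L r" using Lmono by auto
        then have "insert oi (L r) = L r" "insert oi (L (r - 1)) = L (r - 1)" using True by auto
        then have "e r = Dl r" unfolding e_def Dl_def by simp
        moreover have "0 \<le> Dl r" using Dlpos r by simp
        moreover have "0 < cw oi" using cwpos oin by simp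
        ultimately show "c (L r) * Dl r \<le> (cw oi + c (L r)) * e r"
          by (simp add: distrib_right)
      qed
      have head: "c (L j) * Dl j \<le> (cw oi + c (L (j - 1))) * marg u oi (L (j - 1)) + (cw oi + c (L j)) * e j"
      proof (cases "oi \<in> L (j - 1)")
        case True2: True
        have m0: "marg u oi (L (j - 1)) = 0" unfolding marg_def using True2 by (simp add: insert_absorb)
        have "L (j - 1) \<subseteq> L j" using Lmono by simp
        then have "e j = Dl j" unfolding e_def Dl_def using True True2 by (simp add: insert_absorb)
        moreover have "0 \<le> Dl j" using Dlpos j1 by simp
        moreover have "0 < cw oi" using cwpos oin by simp
        ultimately show ?thesis using m0 by (simp add: distrib_right)
      next
        case False2: False
        have oeq: "oi = l ! (j - 1)" using True False2 Lins[OF j1] by auto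
        have LjI: "insert oi (L (j - 1)) = L j" using Lins[OF j1] oeq by simp
        have e0: "e j = 0" unfolding e_def using LjI True by (simp add: insert_absorb)
        have cj: "c (L j) = cw oi + c (L (j - 1))"
          unfolding LjI[symmetric] c_def using False2 by (simp add: L_def)
        show ?thesis unfolding e0 cj marg_def LjI Dl_def by simp
      qed
      show ?thesis unfolding split1[of "\<lambda>r. c (L r) * Dl r"] split1[of "\<lambda>r. (cw oi + c (L r)) * e r"]
        using head tail by linarith
    next
      case False
      have "oi \<in> set l" using oin sl by simp
      then obtain p where p: "p < length l" "l ! p = oi" by (metis in_set_conv_nth)
      have pj: "j \<le> p"
      proof (rule ccontr)
        assume "\<not> j \<le> p"
        then have "l ! p \<in> set (take j l)" using p by (metis in_set_conv_nth length_take min_less_iff_conj not_le_imp_less nth_take)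
        then show False using False p unfolding L_def by simp
      qed
      define q where "q = j - 1"
      have qj: "j = Suc q" using j q_def by simp
      have qp: "q < p" using pj qj by simp
      have qn: "q < length l" using qp p by simp
      have "seq_obj u cw l \<le> seq_obj u cw (pseudo_neighbor l p q)"
        using assms(9) p qp unfolding locally_optimal_def by blast
      moreover have "pseudo_neighbor l p q = take q l @ [oi] @ drop q l"
        unfolding pseudo_neighbor_def using p by simp
      ultimately have lo: "seq_obj u cw l \<le> seq_obj u cw (take q l @ [oi] @ drop q l)" by simp
      have TmL: "\<And>k. Tm u cw l k = c (L k) * Dl k" unfolding Tm_def Dl_def cL unfolding L_def by simp
      have s1: "seq_obj u cw l = (\<Sum>k=1..q. Tm u cw l k) + (\<Sum>k=Suc q..n. c (L k) * Dl k)"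
        unfolding seq_obj_Tm ll TmL[symmetric] by (rule split_sum) (use qn ll in simp)
      have s2: "seq_obj u cw (take q l @ [oi] @ drop q l) = (\<Sum>k=1..q. Tm u cw l k)
         + (cw oi + c (L q)) * marg u oi (L q) + (\<Sum>r=Suc q..n. (cw oi + c (L r)) * e r)"
        unfolding pn_obj[OF qn] ll e_def marg_def cL unfolding L_def by (simp add: add.commute)
      show ?thesis using lo unfolding s1 s2 qj by simp
    qed
    have LHS: "(\<Sum>r=j..n. c (L r) * (\<Sum>s=1..n. b s r)) = (\<Sum>r=j..n. c (L r) * Dl r)"
      by (rule sum.cong) (use hsumb j in auto)
    have RHS: "(cw oi + c (L (j - 1))) * (\<Sum>r=j..n. b i r)
                + (\<Sum>r=j..n. (cw oi + c (L r)) * (\<Sum>s\<in>{1..n} - {i}. b s r))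
         = (\<Sum>r=j..n. (cw oi + c (L (j - 1))) * b i r + (cw oi + c (L r)) * (Dl r - b i r))"
    proof -
      have "(\<Sum>r=j..n. (cw oi + c (L r)) * (\<Sum>s\<in>{1..n} - {i}. b s r)) = (\<Sum>r=j..n. (cw oi + c (L r)) * (Dl r - b i r))"
        by (rule sum.cong) (use hsumb' j in auto)
      then show ?thesis by (simp add: sum_distrib_left sum.distrib)
    qed
    have NEW: "(cw oi + c (L (j - 1))) * marg u oi (L (j - 1))
         + (\<Sum>r=j..n. (cw oi + c (L r)) * e r)
         = (\<Sum>r=j..n. (cw oi + c (L (j - 1))) * a r + (cw oi + c (L r)) * (Dl r - a r))"
      unfolding ha_sum[symmetric] hae by (simp add: sum_distrib_left sum.distrib)
    have cmp: "(\<Sum>r=j..n. (cw oi + c (L (j - 1))) * a r + (cw oi + c (L r)) * (Dl r - a r))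
        \<le> (\<Sum>r=j..n. (cw oi + c (L (j - 1))) * b i r + (cw oi + c (L r)) * (Dl r - b i r))"
    proof (rule sum_mono)
      fix r assume r: "r \<in> {j..n}"
      have "0 \<le> (c (L r) - c (L (j - 1))) * (a r - b i r)"
        using cmono[of "j - 1" r] r hab[OF r] by (intro mult_nonneg_nonneg) auto
      moreover have "(cw oi + c (L (j - 1))) * a r + (cw oi + c (L r)) * (Dl r - a r)
         - ((cw oi + c (L (j - 1))) * b i r + (cw oi + c (L r)) * (Dl r - b i r))
         = - ((c (L r) - c (L (j - 1))) * (a r - b i r))" by (simp add: algebra_simps)
      ultimately show "(cw oi + c (L (j - 1))) * a r + (cw oi + c (L r)) * (Dl r - a r)
         \<le> (cw oi + c (L (j - 1))) * b i r + (cw oi + c (L r)) * (Dl r - b i r)" by linarith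
    qed
    show "(\<Sum>r=j..n. c (L r) * (\<Sum>s=1..n. b s r))
              \<le> (cw (ol ! (i - 1)) + c (L (j - 1))) * (\<Sum>r=j..n. b i r)
                + (\<Sum>r=j..n. (cw (ol ! (i - 1)) + c (L r)) * (\<Sum>s\<in>{1..n} - {i}. b s r))"
      unfolding oi_def[symmetric] LHS RHS using hold_new NEW cmp by linarith
  qed
  then show ?thesis unfolding Let_def c_def L_def Os_def b_def .
qed

end
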